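(* There is a universal constant $C$ such that for all positive integers $k,n$ and all distinct integers $g_0,g_1$, there is a $k$-party, one-round, deterministic protocol for the Sum-Distinguish problem over $\mathbb{Z}$ with $n$-bit inputs relative to $g_0,g_1$ with total communication complexity at most $k\log k+C\cdot k$.
   Context: Model: parties $P_1,\dots,P_k$ each hold an integer input $x_i\in\{0,\dots,2^n-1\}$; a coordinator (distinct from the parties) wants to compute $f(x_1,\dots,x_k)$. In a deterministic one-round protocol each party sends a single message, a function of its own input only, to the coordinator, who outputs a value depending only on the received messages; there is no other communication. Total communication complexity is the maximum over inputs of the total number of bits sent. Sum-Distinguish over $\mathbb{Z}$ relative to distinct integers $g_0,g_1$: the partial function $f=1$ if $\sum_i x_i=g_1$ and $f=0$ if $\sum_i x_i=g_0$ (undefined otherwise); the protocol must output the correct value on every input where $f$ is defined. $\log$ is base 2. *)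

theory Defs
  imports Complex_Main
begin

definition valid_inputs :: "nat \<Rightarrow> nat \<Rightarrow> nat list set" where
  "valid_inputs k n = {x. length x = k \<and> (\<forall>i<k. x ! i < 2 ^ n)}"

text \<open>A deterministic one-round protocol: msg i is the message function of party i
  (depends only on its own input); out is the coordinator's output (True = 1, False = 0),
  depending only on the tuple of received messages.\<close>
definition run_protocol ::
  "(nat \<Rightarrow> nat \<Rightarrow> bool list) \<Rightarrow> (bool list list \<Rightarrow> bool) \<Rightarrow> nat list \<Rightarrow> bool" where
  "run_protocol msg out x = out (map (\<lambda>i. msg i (x ! i)) [0..<length x])"

definition bits_sent :: "(nat \<Rightarrow> nat \<Rightarrow> bool list) \<Rightarrow> nat list \<Rightarrow> nat" where
  "bits_sent msg x = (\<Sum>i<length x. length (msg i (x ! i)))"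

definition total_cc :: "nat \<Rightarrow> nat \<Rightarrow> (nat \<Rightarrow> nat \<Rightarrow> bool list) \<Rightarrow> nat" where
  "total_cc k n msg = Max (bits_sent msg ` valid_inputs k n)"

definition solves_sum_distinguish ::
  "nat \<Rightarrow> nat \<Rightarrow> int \<Rightarrow> int \<Rightarrow> (nat \<Rightarrow> nat \<Rightarrow> bool list) \<Rightarrow> (bool list list \<Rightarrow> bool) \<Rightarrow> bool" where
  "solves_sum_distinguish k n g0 g1 msg out \<longleftrightarrow>
     (\<forall>x\<in>valid_inputs k n.
        (int (sum_list x) = g1 \<longrightarrow> run_protocol msg out x = True) \<and>
        (int (sum_list x) = g0 \<longrightarrow> run_protocol msg out x = False))"

end

theory Submission imports Defs begin

definition tq :: "nat \<Rightarrow> nat \<Rightarrow> nat \<Rightarrow> nat" where "tq M S v = (v mod M) * S div M"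
definition enc :: "nat \<Rightarrow> nat \<Rightarrow> bool list" where "enc L v = map (bit v) [0..<L]"

lemma enc_inj: assumes "v < 2^L" "w < 2^L" "enc L v = enc L w" shows "v = w"
proof -
  have "bit v i = bit w i" for i
  proof (cases "i < L")
    case True
    show ?thesis using True assms(3) by (auto simp: enc_def)
  next
    case False
    then have "(2::nat)^L \<le> 2^i" by simp
    then have "v div 2^i = 0" "w div 2^i = 0" using assms(1,2) by (meson div_less order_less_le_trans)+
    then show ?thesis by (simp add: bit_nat_def)
  qed
  then show ?thesis by (simp add: bit_eq_iff)
qed

lemma tq_bounds: assumes "M > 0" shows "M * tq M S v \<le> (v mod M) * S" "(v mod M) * S + 1 \<le> M * tq M S v + M"
proof -
  let ?a = "(v mod M) * S"
  have e: "?a = M * (?a div M) + ?a mod M" by simp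
  have "?a mod M < M" using assms by simp
  then show "M * tq M S v \<le> (v mod M) * S" "(v mod M) * S + 1 \<le> M * tq M S v + M"
    unfolding tq_def using e by linarith+
qed

lemma tq_less: assumes "M > 0" "S > 0" shows "tq M S v < S"
proof -
  have "(v mod M) * S < M * S" using assms by simp
  then show ?thesis unfolding tq_def using assms
    by (simp add: div_less_iff_less_mult mult.commute)
qed

lemma bnd: assumes M0: "M > 0"
  shows "M * (\<Sum>i<k. tq M S (f i)) \<le> S * (\<Sum>i<k. f i mod M) \<and>
         S * (\<Sum>i<k. f i mod M) + k \<le> M * (\<Sum>i<k. tq M S (f i)) + M * k"
proof
    have "M * (\<Sum>i<k. tq M S (f i)) = (\<Sum>i<k. M * tq M S (f i))" unfolding sum_distrib_left ..
    also have "\<dots> \<le> (\<Sum>i<k. (f i mod M) * S)" by (rule sum_mono) (use tq_bounds[OF M0] in auto)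
    also have "\<dots> = S * (\<Sum>i<k. f i mod M)" unfolding sum_distrib_left by (simp add: mult.commute)
    finally show "M * (\<Sum>i<k. tq M S (f i)) \<le> S * (\<Sum>i<k. f i mod M)" .
    have "S * (\<Sum>i<k. f i mod M) + k = (\<Sum>i<k. (f i mod M) * S + 1)" unfolding sum_distrib_left sum.distrib by (simp add: mult.commute)
    also have "\<dots> \<le> (\<Sum>i<k. M * tq M S (f i) + M)" by (rule sum_mono) (use tq_bounds[OF M0] in auto)
    also have "\<dots> = M * (\<Sum>i<k. tq M S (f i)) + M * k" unfolding sum_distrib_left sum.distrib by simp
    finally show "S * (\<Sum>i<k. f i mod M) + k \<le> M * (\<Sum>i<k. tq M S (f i)) + M * k" .
qed

lemma key:
  assumes lx: "length x = k" and ly: "length y = k" and k: "k \<ge> 1" and M: "M = 2*h" "h > 0"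
    and S: "S \<ge> 2*k" and t: "\<forall>i<k. tq M S (x!i) = tq M S (y!i)"
    and hd: "int h dvd d" and Md: "\<not> int M dvd d"
    and d: "int (sum_list x) - int (sum_list y) = d"
  shows False
proof -
  have M0: "M > 0" using M by simp
  define A where "A = (\<Sum>i<k. x!i mod M)"
  define B where "B = (\<Sum>i<k. y!i mod M)"
  define T where "T = (\<Sum>i<k. tq M S (x!i))"
  have Ty: "T = (\<Sum>i<k. tq M S (y!i))" unfolding T_def using t by simp
  have sx: "sum_list x = M * (\<Sum>i<k. x!i div M) + A"
    unfolding A_def sum_list_sum_nth lx sum_distrib_left sum.distrib[symmetric]
    by (simp add: atLeast0LessThan)
  have sy: "sum_list y = M * (\<Sum>i<k. y!i div M) + B"
    unfolding B_def sum_list_sum_nth ly sum_distrib_left sum.distrib[symmetric]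
    by (simp add: atLeast0LessThan)
  have diff: "d = int M * (int (\<Sum>i<k. x!i div M) - int (\<Sum>i<k. y!i div M)) + (int A - int B)"
    using d sx sy by (simp add: algebra_simps)
  have hAB: "int h dvd (int A - int B)"
  proof -
    have "int h dvd int M" using M by simp
    then have "int h dvd int M * (int (\<Sum>i<k. x!i div M) - int (\<Sum>i<k. y!i div M))" by simp
    then show ?thesis using hd diff by (metis dvd_add_right_iff)
  qed
  have AB: "int A - int B \<noteq> 0"
  proof
    assume "int A - int B = 0"
    then have "int M dvd d" using diff by simp
    then show False using Md by simp
  qed
  have ax: "M * T \<le> S * A" "S * A + k \<le> M * T + M * k"
    using bnd[OF M0, of S "\<lambda>i. x!i" k] unfolding A_def T_def by auto
  have ay: "M * T \<le> S * B" "S * B + k \<le> M * T + M * k"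
    using bnd[OF M0, of S "\<lambda>i. y!i" k] unfolding B_def Ty by auto
  have i1: "int S * (int A - int B) < int M * int k"
  proof -
    have "int S * int A + int k \<le> int S * int B + int M * int k" using ax(2) ay(1)
      by (metis of_nat_add of_nat_le_iff of_nat_mult add_le_mono1 order_trans)
    then show ?thesis using k by (simp add: algebra_simps)
  qed
  have i2: "int S * (int B - int A) < int M * int k"
  proof -
    have "int S * int B + int k \<le> int S * int A + int M * int k" using ay(2) ax(1)
      by (metis of_nat_add of_nat_le_iff of_nat_mult add_le_mono1 order_trans)
    then show ?thesis using k by (simp add: algebra_simps)
  qed
  have ge: "int h \<le> \<bar>int A - int B\<bar>"
    proof -
    have "int h dvd \<bar>int A - int B\<bar>" using hAB by simp
    moreover have "\<bar>int A - int B\<bar> > 0" using AB by simp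
    ultimately show ?thesis by (rule zdvd_imp_le)
  qed
  have "int S * int h \<le> int S * \<bar>int A - int B\<bar>" using ge by (simp add: mult_left_mono)
  also have "\<dots> < int M * int k" using i1 i2 by (simp add: abs_if algebra_simps)
  finally have "int S * int h < 2 * int h * int k" using M by simp
  then have "int S < 2 * int k" using M(2) by (simp add: mult.commute mult.left_commute)
  then show False using S by simp
qed
lemma exj: assumes "(d::int) \<noteq> 0" shows "\<exists>j. 2^j dvd d \<and> \<not> 2^(Suc j) dvd d"
proof -
  have ex: "\<exists>j. \<not> (2::int)^j dvd d"
  proof
    have "\<bar>d\<bar> < 2 ^ nat \<bar>d\<bar>"
      by (metis abs_ge_zero int_nat_eq less_exp of_nat_less_iff of_nat_numeral of_nat_power)
    then show "\<not> (2::int)^nat \<bar>d\<bar> dvd d"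
    proof (intro notI)
      assume "(2::int)^nat \<bar>d\<bar> dvd d"
      then have "\<bar>(2::int)^nat \<bar>d\<bar>\<bar> \<le> \<bar>d\<bar>" using dvd_imp_le_int[OF assms] by blast
      then show False using \<open>\<bar>d\<bar> < 2 ^ nat \<bar>d\<bar>\<close> by simp
    qed
  qed
  define j' where "j' = (LEAST j. \<not> (2::int)^j dvd d)"
  have nj: "\<not> (2::int)^j' dvd d" unfolding j'_def using ex by (rule LeastI_ex)
  have "j' \<noteq> 0" using nj by (metis one_dvd power_0)
  then obtain j where j: "j' = Suc j" by (cases j') auto
  have "(2::int)^j dvd d" using not_less_Least[of j "\<lambda>j. \<not> (2::int)^j dvd d"] j unfolding j'_def by auto
  then show ?thesis using nj j by blast
qed

lemma pow_ceil: assumes "k \<ge> (1::nat)" shows "k \<le> 2 ^ nat \<lceil>log 2 (real k)\<rceil>"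
proof -
  have l0: "log 2 (real k) \<ge> 0" using assms by simp
  have "real k = 2 powr (log 2 (real k))" using assms by simp
  also have "\<dots> \<le> 2 powr (real_of_int \<lceil>log 2 (real k)\<rceil>)" by (simp add: ceiling_correct)
  also have "\<dots> = 2 powr (real (nat \<lceil>log 2 (real k)\<rceil>))" using l0 by simp
  also have "\<dots> = 2 ^ nat \<lceil>log 2 (real k)\<rceil>" by (simp add: powr_realpow)
  finally show ?thesis by (metis of_nat_le_iff of_nat_numeral of_nat_power)
qed

theorem mainTheorem10:
  shows "\<exists>C::real. \<forall>k n::nat. \<forall>g0 g1::int. k \<ge> 1 \<longrightarrow> n \<ge> 1 \<longrightarrow> g0 \<noteq> g1 \<longrightarrow>
    (\<exists>msg out. solves_sum_distinguish k n g0 g1 msg out \<and>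
       real (total_cc k n msg) \<le> real k * log 2 (real k) + C * real k)"
proof (rule exI[of _ 2], intro allI impI)
  fix k n :: nat and g0 g1 :: int
  assume k: "k \<ge> 1" and n: "n \<ge> 1" and g: "g0 \<noteq> g1"
  obtain j where j: "2^j dvd (g0 - g1)" "\<not> 2^(Suc j) dvd (g0 - g1)" using exj[of "g0 - g1"] g by auto
  define h :: nat where "h = 2^j"
  define M :: nat where "M = 2*h"
  define s :: nat where "s = nat \<lceil>log 2 (real k)\<rceil> + 1"
  define S :: nat where "S = 2^s"
  define msg where "msg = (\<lambda>(i::nat) v. enc s (tq M S v))"
  define out where "out = (\<lambda>ms. \<exists>y\<in>valid_inputs k n. map (\<lambda>i. msg i (y!i)) [0..<k] = ms \<and> int (sum_list y) = g1)"
  have h0: "h > 0" unfolding h_def by simp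
  have M0: "M > 0" using h0 M_def by simp
  have S0: "S > 0" unfolding S_def by simp
  have S2k: "S \<ge> 2*k" unfolding S_def s_def using pow_ceil[OF k] by simp
  have hd: "int h dvd (g0 - g1)" using j(1) unfolding h_def by simp
  have Md: "\<not> int M dvd (g0 - g1)" using j(2) unfolding M_def h_def by simp
  have sol: "solves_sum_distinguish k n g0 g1 msg out"
    unfolding solves_sum_distinguish_def
  proof (intro ballI conjI impI)
    fix x assume xv: "x \<in> valid_inputs k n"
    then have lx: "length x = k" by (simp add: valid_inputs_def)
    show "int (sum_list x) = g1 \<Longrightarrow> run_protocol msg out x = True"
      unfolding run_protocol_def out_def using xv lx by auto
    assume sx: "int (sum_list x) = g0"
    show "run_protocol msg out x = False"
    proof (rule ccontr)
      assume "run_protocol msg out x \<noteq> False"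
      then obtain y where yv: "y \<in> valid_inputs k n" and
        eq: "map (\<lambda>i. msg i (y!i)) [0..<k] = map (\<lambda>i. msg i (x!i)) [0..<k]" and sy: "int (sum_list y) = g1"
        unfolding run_protocol_def out_def lx by auto
      have ly: "length y = k" using yv by (simp add: valid_inputs_def)
      have t: "\<forall>i<k. tq M S (x!i) = tq M S (y!i)"
      proof (intro allI impI)
        fix i assume "i < k"
        then have "msg i (x!i) = msg i (y!i)" using eq by (simp add: map_eq_conv)
        then have "enc s (tq M S (x!i)) = enc s (tq M S (y!i))" unfolding msg_def by simp
        moreover have "tq M S (x!i) < 2^s" "tq M S (y!i) < 2^s" using tq_less[OF M0 S0] S_def by auto
        ultimately show "tq M S (x!i) = tq M S (y!i)" using enc_inj by blast
      qed
      show False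
        by (rule key[OF lx ly k M_def h0 S2k t hd Md]) (use sx sy in simp)
    qed
  qed
  have vne: "replicate k 0 \<in> valid_inputs k n" by (simp add: valid_inputs_def)
  have bs: "bits_sent msg x = k * s" if "x \<in> valid_inputs k n" for x
    using that by (simp add: bits_sent_def valid_inputs_def msg_def enc_def)
  have img: "bits_sent msg ` valid_inputs k n = {k * s}"
  proof
    show "bits_sent msg ` valid_inputs k n \<subseteq> {k * s}" using bs by auto
    show "{k * s} \<subseteq> bits_sent msg ` valid_inputs k n" using bs[OF vne] vne by (metis empty_subsetI image_eqI insert_subset)
  qed
  have tc: "total_cc k n msg = k * s" unfolding total_cc_def img by simp
  have l0: "log 2 (real k) \<ge> 0" using k by simp
  have "real s \<le> log 2 (real k) + 2"
    unfolding s_def using l0 by (simp add: of_nat_nat) (linarith)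
  then have "real (total_cc k n msg) \<le> real k * (log 2 (real k) + 2)"
    unfolding tc by (simp add: mult_left_mono)
  then show "\<exists>msg out. solves_sum_distinguish k n g0 g1 msg out \<and>
       real (total_cc k n msg) \<le> real k * log 2 (real k) + 2 * real k"
    using sol by (auto simp: algebra_simps)
qed

end
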